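(* For every $l\ge 0$, up to a unit of $\mathbb{Z}[q,q^{-1}]$, $$\mathrm{GCD}(f_{l,0},\dots,f_{l,l})=\prod_{m\ge1}\Phi_m^{t_{l,m}},\qquad t_{l,m}=\begin{cases}\lfloor \tfrac{l+1}{m}\rfloor-1 & 1\le m\le l,\\ 0 & m>l.\end{cases}$$
   Context: In $\mathbb{Z}[q,q^{-1}]$ set $\{i\}_q=q^i-1$, $\{i\}_{q,n}=\{i\}_q\cdots\{i-n+1\}_q$ (equal to $1$ for $n=0$), $\{n\}_q!=\{n\}_{q,n}$, and $f_{l,k}=\{l-k\}_q!\{k\}_q!$ for $0\le k\le l$. GCD is a greatest common divisor in the UFD $\mathbb{Z}[q,q^{-1}]$ (defined up to units $\pm q^j$). $\Phi_m$ is the $m$th cyclotomic polynomial; $\lfloor r\rfloor$ is the floor of $r$. *)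

theory Defs
  imports Complex_Main "HOL-Computational_Algebra.Computational_Algebra"
begin

definition qbr :: "nat \<Rightarrow> int poly" where
  "qbr i = monom 1 i - 1"

definition qfact :: "nat \<Rightarrow> int poly" where
  "qfact n = (\<Prod>i\<in>{1..n}. qbr i)"

definition f :: "nat \<Rightarrow> nat \<Rightarrow> int poly" where
  "f l k = qfact (l - k) * qfact k"

definition cyclotomic :: "nat \<Rightarrow> int poly" where
  "cyclotomic m = (THE p. map_poly of_int p =
      (\<Prod>k\<in>{k. k < m \<and> coprime k m}. [:- cis (2 * pi * real k / real m), 1:]))"

definition t :: "nat \<Rightarrow> nat \<Rightarrow> nat" where
  "t l m = (if 1 \<le> m \<and> m \<le> l then (l + 1) div m - 1 else 0)"

end

theory Submission
  imports Defs
begin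


abbreviation ip :: "int poly \<Rightarrow> complex poly" where "ip \<equiv> map_poly of_int"

lemma ip_add [simp]: "ip (p + q) = ip p + ip q"
  by (intro poly_eqI) (simp_all add: coeff_map_poly)
lemma ip_diff [simp]: "ip (p - q) = ip p - ip q"
  by (intro poly_eqI) (simp_all add: coeff_map_poly)
lemma ip_mult [simp]: "ip (p * q) = ip p * ip q"
  by (intro poly_eqI) (simp_all add: coeff_map_poly coeff_mult)
lemma ip_eq_iff [simp]: "ip p = ip q \<longleftrightarrow> p = q"
  by (auto simp: poly_eq_iff coeff_map_poly)
lemma ip_prod: "ip (prod g A) = (\<Prod>x\<in>A. ip (g x))"
  by (induction A rule: infinite_finite_induct) auto
lemma ip_power: "ip (p ^ n) = ip p ^ n"
  by (induction n) auto
lemma ip_monom [simp]: "ip (monom c n) = monom (of_int c) n"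
  by (simp add: map_poly_monom)

definition Pc :: "nat \<Rightarrow> complex poly" where
  "Pc m = (\<Prod>k\<in>{k. k < m \<and> coprime k m}. [:- cis (2 * pi * real k / real m), 1:])"

lemma xn1_prod:
  assumes "n > 0"
  shows "(monom 1 n - 1 :: complex poly) = (\<Prod>k<n. [:- cis (2 * pi * real k / real n), 1:])"
proof -
  let ?p = "monom 1 n - 1 :: complex poly"
  have c: "coeff ?p n = 1" using assms by (simp add: coeff_monom)
  have "degree ?p \<le> n" by (intro degree_diff_le) (auto simp: degree_monom_le)
  moreover have "n \<le> degree ?p" using c by (intro le_degree) simp
  ultimately have deg: "degree ?p = n" by simp
  have lc: "lead_coeff ?p = 1" using c deg by simp
  have rt: "{z. poly ?p z = 0} = {z. z ^ n = 1}" by (auto simp: poly_monom)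
  have rsf: "rsquarefree ?p"
    unfolding rsquarefree_roots
  proof (intro allI notI)
    fix a assume h: "poly ?p a = 0 \<and> poly (pderiv ?p) a = 0"
    have "pderiv ?p = monom (of_nat n) (n - 1)" by (simp add: pderiv_diff pderiv_monom)
    hence "of_nat n * a ^ (n-1) = 0" using h by (simp add: poly_monom)
    hence "a = 0" using assms by simp
    thus False using h assms by (simp add: poly_monom power_0_left)
  qed
  have "?p = smult (lead_coeff ?p) (\<Prod>z|poly ?p z = 0. [:-z, 1:])"
    using complex_poly_decompose_rsquarefree[OF rsf] by simp
  also have "\<dots> = (\<Prod>z\<in>{z. z ^ n = 1}. [:-z, 1:])" using lc rt by simp
  also have "\<dots> = (\<Prod>k<n. [:- cis (2 * pi * real k / real n), 1:])"
    using prod.reindex_bij_betw[OF bij_betw_roots_unity[OF assms], of "\<lambda>z. [:-z,1:]"] by simp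
  finally show ?thesis .
qed

lemma regroup:
  assumes n: "n > 0"
  shows "(\<Prod>d\<in>{d. d dvd n}. Pc d) = (\<Prod>k<n. [:- cis (2 * pi * real k / real n), 1:])"
proof -
  define S where "S = Sigma {d. d dvd n} (\<lambda>d. {k. k < d \<and> coprime k d})"
  define \<phi> where "\<phi> = (\<lambda>(d,k). k * (n div d))"
  define \<psi> where "\<psi> = (\<lambda>j. (n div gcd j n, j div gcd j n))"
  have fin: "finite {d. d dvd n}" using n by simp
  have "(\<Prod>d\<in>{d. d dvd n}. Pc d) = (\<Prod>(d,k)\<in>S. [:- cis (2 * pi * real k / real d), 1:])"
    unfolding Pc_def S_def using fin by (subst prod.Sigma) auto
  also have "\<dots> = (\<Prod>x\<in>S. [:- cis (2 * pi * real (\<phi> x) / real n), 1:])"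
  proof (intro prod.cong refl)
    fix x assume "x \<in> S"
    then obtain d k where x: "x = (d,k)" "d dvd n" by (auto simp: S_def)
    then obtain m where m: "n = d * m" by blast
    with n have "d > 0" "m > 0" by auto
    hence e: "2 * pi * real k / real d = 2 * pi * real (k * (n div d)) / real n" using m by (simp add: field_simps)
    show "(case x of (d, k) \<Rightarrow> [:- cis (2 * pi * real k / real d), 1:]) =
        [:- cis (2 * pi * real (\<phi> x) / real n), 1:]" unfolding x \<phi>_def by (simp only: case_prod_conv e)
  qed
  also have "\<dots> = (\<Prod>k<n. [:- cis (2 * pi * real k / real n), 1:])"
  proof (rule prod.reindex_bij_betw)
    show "bij_betw \<phi> S {..<n}"
    proof (rule bij_betw_byWitness[where f' = \<psi>])
      show "\<forall>a\<in>S. \<psi> (\<phi> a) = a"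
      proof
        fix a assume "a \<in> S"
        then obtain d k where a: "a = (d,k)" "d dvd n" "coprime k d" by (auto simp: S_def)
        then obtain m where m: "n = d * m" by blast
        with n have "d > 0" "m > 0" by auto
        have "gcd (k * m) n = m" using a(3) m
          by (metis coprime_iff_gcd_eq_1 gcd_mult_distrib_nat mult.commute mult_1)
        thus "\<psi> (\<phi> a) = a" using a m \<open>d > 0\<close> \<open>m > 0\<close> by (simp add: \<phi>_def \<psi>_def)
      qed
      show "\<forall>a'\<in>{..<n}. \<phi> (\<psi> a') = a'"
      proof
        fix j assume "j \<in> {..<n}"
        define g where "g = gcd j n"
        have "g > 0" "g dvd n" "g dvd j" using n by (auto simp: g_def)
        then obtain c where c: "n = g * c" by blast
        with n have "c > 0" by auto
        have "n div (n div g) = g" using c \<open>g > 0\<close> \<open>c > 0\<close> by simp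
        thus "\<phi> (\<psi> j) = j" using \<open>g dvd j\<close> by (simp add: \<phi>_def \<psi>_def g_def[symmetric])
      qed
      show "\<phi> ` S \<subseteq> {..<n}"
      proof
        fix x assume "x \<in> \<phi> ` S"
        then obtain d k where a: "x = \<phi> (d,k)" "d dvd n" "k < d" by (auto simp: S_def)
        then obtain m where m: "n = d * m" by blast
        with n have "m > 0" by auto
        have "k * m < d * m" using a \<open>m > 0\<close> by simp
        thus "x \<in> {..<n}" using a m by (simp add: \<phi>_def)
      qed
      show "\<psi> ` {..<n} \<subseteq> S"
      proof
        fix x assume "x \<in> \<psi> ` {..<n}"
        then obtain j where j: "x = \<psi> j" "j < n" by auto
        define g where "g = gcd j n"
        have "g > 0" "g dvd n" "g dvd j" using n by (auto simp: g_def)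
        have "j div g < n div g" using j \<open>g dvd n\<close> \<open>g dvd j\<close> \<open>g > 0\<close>
          by (metis div_less_iff_less_mult dvd_div_mult_self)
        moreover have "coprime (j div g) (n div g)" unfolding g_def
          using div_gcd_coprime n by blast
        moreover have "n div g dvd n" using \<open>g dvd n\<close> by (metis dvd_div_mult_self dvd_triv_left)
        ultimately show "x \<in> S" using j by (simp add: S_def \<psi>_def g_def[symmetric])
      qed
    qed
  qed
  finally show ?thesis .
qed

lemma Pc_prod:
  assumes n: "n > 0"
  shows "(\<Prod>d\<in>{d. d dvd n}. Pc d) = monom 1 n - 1"
  using regroup[OF n] xn1_prod[OF n] by simp

lemma lc_Pc: "lead_coeff (Pc n) = 1"
  unfolding Pc_def by (simp add: lead_coeff_prod)

lemma Pc_nz: "Pc n \<noteq> 0"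
  using lc_Pc[of n] by auto

lemma lc_ip: "lead_coeff (ip p) = of_int (lead_coeff p)"
  by (simp add: degree_map_poly coeff_map_poly)

lemma Pc_int: "n > 0 \<Longrightarrow> \<exists>p. ip p = Pc n"
proof (induction n rule: less_induct)
  case (less n)
  define D where "D = {d. d dvd n} - {n}"
  define P where "P = (\<lambda>d. SOME p. ip p = Pc d)"
  have finD: "finite D" using less.prems by (simp add: D_def)
  have PD: "ip (P d) = Pc d" if "d \<in> D" for d
  proof -
    have "d < n" "d > 0" using that less.prems by (auto simp: D_def dest: dvd_imp_le intro: Nat.gr0I)
    from less.IH[OF this] show ?thesis unfolding P_def by (rule someI_ex)
  qed
  define B where "B = (\<Prod>d\<in>D. P d)"
  have ipB: "ip B = (\<Prod>d\<in>D. Pc d)" unfolding B_def ip_prod using PD by (intro prod.cong) auto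
  have "lead_coeff (ip B) = 1" unfolding ipB by (simp add: lead_coeff_prod lc_Pc)
  hence lcB: "lead_coeff B = 1" by (simp add: lc_ip)
  hence Bnz: "B \<noteq> 0" by auto
  define A :: "int poly" where "A = monom 1 n - 1"
  have "ip A = monom 1 n - 1" by (simp add: A_def)
  also have "\<dots> = (\<Prod>d\<in>{d. d dvd n}. Pc d)" using Pc_prod[OF less.prems] by simp
  also have "\<dots> = Pc n * (\<Prod>d\<in>D. Pc d)" unfolding D_def using less.prems
    by (subst prod.remove[of _ n]) auto
  finally have ipA: "ip A = ip B * Pc n" unfolding ipB by (simp add: mult.commute)
  obtain q r where qr: "pseudo_divmod A B = (q, r)" by (cases "pseudo_divmod A B") auto
  from pseudo_divmod[OF Bnz qr] lcB have A: "A = B * q + r" and r: "r = 0 \<or> degree r < degree B"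
    by auto
  have "ip B * (Pc n - ip q) = ip r" using ipA A by (simp add: algebra_simps)
  show ?case
  proof (rule ccontr)
    assume "\<not> ?thesis"
    hence ne: "Pc n - ip q \<noteq> 0" by auto
    have ipBnz: "ip B \<noteq> 0" using Bnz by (metis ip_eq_iff map_poly_0)
    have "degree (ip B * (Pc n - ip q)) = degree (ip B) + degree (Pc n - ip q)"
      by (rule degree_mult_eq[OF ipBnz ne])
    hence "degree (ip r) \<ge> degree B" using \<open>ip B * (Pc n - ip q) = ip r\<close> by (simp add: degree_map_poly)
    moreover have "ip r \<noteq> 0" using ne ipBnz \<open>ip B * (Pc n - ip q) = ip r\<close> by auto
    ultimately show False using r by (auto simp: degree_map_poly)
  qed
qed

lemma cyc_ip: assumes "n > 0" shows "ip (cyclotomic n) = Pc n"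
proof -
  from Pc_int[OF assms] obtain p where "ip p = Pc n" by blast
  hence "\<exists>!p. ip p = Pc n" by (metis ip_eq_iff)
  from theI'[OF this] show ?thesis unfolding cyclotomic_def Pc_def by simp
qed

lemma cyc_prod: assumes "n > 0" shows "(\<Prod>d\<in>{d. d dvd n}. cyclotomic d) = monom 1 n - 1"
proof -
  have "ip (\<Prod>d\<in>{d. d dvd n}. cyclotomic d) = (\<Prod>d\<in>{d. d dvd n}. Pc d)"
    unfolding ip_prod using assms by (intro prod.cong refl cyc_ip) (auto intro: Nat.gr0I)
  also have "\<dots> = ip (monom 1 n - 1)" using Pc_prod[OF assms] by simp
  finally show ?thesis by (simp only: ip_eq_iff)
qed

lemma lc_cyc: assumes "n > 0" shows "lead_coeff (cyclotomic n) = 1"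
  using cyc_ip[OF assms] lc_Pc[of n] lc_ip[of "cyclotomic n"] by simp

lemma cyc_nz: "n > 0 \<Longrightarrow> cyclotomic n \<noteq> 0"
  using lc_cyc[of n] by auto

lemma qbr_prod:
  assumes "1 \<le> i" "i \<le> L"
  shows "qbr i = (\<Prod>d\<in>{1..L}. cyclotomic d ^ (if d dvd i then 1 else 0))"
proof -
  have "(\<Prod>d\<in>{1..L}. cyclotomic d ^ (if d dvd i then 1 else 0))
      = (\<Prod>d\<in>{1..L}. if d dvd i then cyclotomic d else 1)" by (intro prod.cong) auto
  also have "\<dots> = prod cyclotomic {d \<in> {1..L}. d dvd i}" by (rule prod.inter_filter[symmetric]) simp
  also have "{d \<in> {1..L}. d dvd i} = {d. d dvd i}" using assms
    by (auto dest: dvd_imp_le intro: Nat.gr0I)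
  also have "prod cyclotomic \<dots> = qbr i" using cyc_prod[of i] assms by (simp add: qbr_def)
  finally show ?thesis by simp
qed

lemma Suc_div: "d > 0 \<Longrightarrow> Suc n div d = n div d + (if d dvd Suc n then 1 else 0)"
  by (auto simp: div_Suc dvd_eq_mod_eq_0)

lemma qfact_prod:
  "n \<le> L \<Longrightarrow> qfact n = (\<Prod>d\<in>{1..L}. cyclotomic d ^ (n div d))"
proof (induction n)
  case 0
  then show ?case by (simp add: qfact_def)
next
  case (Suc n)
  have "qfact (Suc n) = qfact n * qbr (Suc n)" unfolding qfact_def
    by (simp add: prod.nat_ivl_Suc' mult.commute)
  also have "\<dots> = (\<Prod>d\<in>{1..L}. cyclotomic d ^ (n div d) * cyclotomic d ^ (if d dvd Suc n then 1 else 0))"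
    using Suc by (simp add: qbr_prod prod.distrib)
  also have "\<dots> = (\<Prod>d\<in>{1..L}. cyclotomic d ^ (Suc n div d))"
    by (intro prod.cong refl) (simp add: Suc_div power_add[symmetric])
  finally show ?case .
qed

lemma f_prod: "k \<le> l \<Longrightarrow> f l k = (\<Prod>d\<in>{1..l}. cyclotomic d ^ ((l - k) div d + k div d))"
  unfolding f_def by (simp add: qfact_prod[of _ l] prod.distrib[symmetric] power_add)

lemma sqfree_xn1:
  fixes p :: "int poly"
  assumes p: "prime p" and N: "N > 0" and dv: "p * p dvd monom 1 N - 1"
  shows False
proof -
  let ?g = "monom 1 N - 1 :: int poly"
  from dv obtain r where g: "?g = p * (p * r)" by (metis dvdE mult.assoc)
  have "pderiv ?g = p * pderiv (p * r) + (p * r) * pderiv p" unfolding g by (rule pderiv_mult)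
  hence d1: "p dvd pderiv ?g" by simp
  have pd: "pderiv ?g = monom (int N) (N - 1)" by (simp add: pderiv_diff pderiv_monom)
  have "monom 1 1 * pderiv ?g - smult (int N) ?g = [:int N:]"
    using N by (simp add: pd mult_monom smult_diff_right smult_monom monom_0)
  moreover have "p dvd monom 1 1 * pderiv ?g - smult (int N) ?g"
    using d1 dv by (intro dvd_diff dvd_mult) (auto intro: dvd_smult dvd_mult_left)
  ultimately have "p dvd [:int N:]" by simp
  hence "degree p = 0" using N by (metis dvd_imp_degree_le degree_pCons_0 le_zero_eq of_nat_0_less_iff pCons_eq_0_iff less_irrefl)
  then obtain c where c: "p = [:c:]" by (elim degree_eq_zeroE) auto
  have "p dvd ?g" using dv by (metis dvd_mult_left)
  hence "c dvd coeff ?g N" using c const_poly_dvd_iff by blast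
  moreover have "coeff ?g N = 1" using N by (simp add: coeff_monom)
  ultimately have "is_unit p" using c by (simp add: is_unit_const_poly_iff)
  with p show False by simp
qed

lemma cyc_distinct_prime:
  fixes p :: "int poly"
  assumes p: "prime p" and d: "d1 > 0" "d2 > 0" "d1 \<noteq> d2"
    and dv: "p dvd cyclotomic d1" "p dvd cyclotomic d2"
  shows False
proof -
  define N where "N = d1 * d2"
  have N: "N > 0" using d by (simp add: N_def)
  have "prod cyclotomic {d1, d2} dvd prod cyclotomic {d. d dvd N}"
    using N by (intro prod_dvd_prod_subset) (auto simp: N_def)
  hence "cyclotomic d1 * cyclotomic d2 dvd monom 1 N - 1" using d cyc_prod[OF N] by simp
  moreover have "p * p dvd cyclotomic d1 * cyclotomic d2" using dv by (rule mult_dvd_mono)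
  ultimately show False using sqfree_xn1[OF p N] dvd_trans by blast
qed



lemma t_lb: "(d::nat) > 0 \<Longrightarrow> k \<le> l \<Longrightarrow> (l+1) div d - 1 \<le> (l-k) div d + k div d"
proof -
  assume d: "d > 0" and k: "k \<le> l"
  define a b where "a = l - k" and "b = k"
  define r where "r = a mod d + b mod d + 1"
  have a1: "a = a div d * d + a mod d" and b1: "b = b div d * d + b mod d" by simp_all
  have "l = a + b" using k by (simp add: a_def b_def)
  hence l0: "l + 1 = r + (a div d * d + b div d * d)" using a1 b1 unfolding r_def by linarith
  have l: "l + 1 = r + (a div d + b div d) * d" unfolding l0 by (simp only: add_mult_distrib)
  have "a mod d < d" "b mod d < d" using d by auto
  hence "r < 2 * d" unfolding r_def by linarith
  hence r2: "r div d < 2" using d by (simp add: div_less_iff_less_mult)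
  have "(l+1) div d = r div d + (a div d + b div d)" unfolding l using d div_mult_self1[of d r "a div d + b div d"] by simp
  hence "(l+1) div d - 1 \<le> a div d + b div d" using r2 by linarith
  thus ?thesis by (simp only: a_def b_def)
qed

lemma t_wit: "1 \<le> (d::nat) \<Longrightarrow> d \<le> l \<Longrightarrow> (l - (d - 1)) div d + (d - 1) div d = (l+1) div d - 1"
proof -
  assume d: "1 \<le> d" "d \<le> l"
  define x where "x = l - (d - 1)"
  have e: "l + 1 = x + d" using d by (simp add: x_def)
  have "(x + d) div d = x div d + 1" using d by simp
  hence "(l+1) div d = x div d + 1" unfolding e .
  moreover have "(d - 1) div d = 0" using d by simp
  ultimately show ?thesis unfolding x_def by simp
qed

lemma mult_prodc:
  fixes q :: "int poly"
  assumes "prime q"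
  shows "multiplicity q (\<Prod>d\<in>{1..l}. cyclotomic d ^ e d) = (\<Sum>d\<in>{1..l}. e d * multiplicity q (cyclotomic d))"
proof -
  have "multiplicity q (\<Prod>d\<in>{1..l}. cyclotomic d ^ e d) = (\<Sum>d\<in>{1..l}. multiplicity q (cyclotomic d ^ e d))"
    using assms by (intro prime_elem_multiplicity_prod_distrib) (auto simp: cyc_nz)
  also have "\<dots> = (\<Sum>d\<in>{1..l}. e d * multiplicity q (cyclotomic d))"
    using assms by (intro sum.cong refl prime_elem_multiplicity_power_distrib) (auto simp: cyc_nz)
  finally show ?thesis .
qed

theorem corollary4p2:
  fixes l :: nat
  shows "Gcd (f l ` {0..l}) = (\<Prod>m\<in>{1..l}. cyclotomic m ^ t l m)"
proof -
  define G where "G = Gcd (f l ` {0..l})"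
  define P where "P = (\<Prod>m\<in>{1..l}. cyclotomic m ^ t l m)"
  have fnz: "f l k \<noteq> 0" if "k \<le> l" for k
    using that by (simp add: f_prod cyc_nz)
  have PG: "P dvd G" unfolding G_def
  proof (rule Gcd_greatest)
    fix b assume "b \<in> f l ` {0..l}"
    then obtain k where k: "k \<le> l" "b = f l k" by auto
    show "P dvd b" unfolding k(2) f_prod[OF k(1)] P_def
    proof (rule prod_dvd_prod, rule le_imp_power_dvd)
      fix d assume "d \<in> {1..l}"
      thus "t l d \<le> (l - k) div d + k div d" using t_lb[of d k l] k by (simp add: t_def)
    qed
  qed
  have Gnz: "G \<noteq> 0"
  proof
    assume "G = 0"
    moreover have "G dvd f l 0" unfolding G_def by (rule Gcd_dvd) auto
    ultimately show False using fnz[of 0] by simp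
  qed
  have GP: "G dvd P"
  proof (rule multiplicity_le_imp_dvd[OF Gnz])
    fix q :: "int poly" assume q: "prime q"
    show "multiplicity q G \<le> multiplicity q P"
    proof (cases "\<exists>d0\<in>{1..l}. q dvd cyclotomic d0")
      case True
      then obtain d0 where d0: "d0 \<in> {1..l}" "q dvd cyclotomic d0" by blast
      define k0 where "k0 = d0 - 1"
      have k0: "k0 \<le> l" using d0 by (auto simp: k0_def)
      have "multiplicity q G \<le> multiplicity q (f l k0)"
        using fnz[OF k0] k0 by (intro dvd_imp_multiplicity_le) (auto simp: G_def intro: Gcd_dvd)
      also have "\<dots> = (\<Sum>d\<in>{1..l}. ((l - k0) div d + k0 div d) * multiplicity q (cyclotomic d))"
        unfolding f_prod[OF k0] using q by (rule mult_prodc)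
      also have "\<dots> = (\<Sum>d\<in>{1..l}. t l d * multiplicity q (cyclotomic d))"
      proof (intro sum.cong refl)
        fix d assume d: "d \<in> {1..l}"
        show "((l - k0) div d + k0 div d) * multiplicity q (cyclotomic d) = t l d * multiplicity q (cyclotomic d)"
        proof (cases "d = d0")
          case True
          thus ?thesis using d t_wit[of d l] by (simp add: k0_def t_def)
        next
          case False
          have "\<not> q dvd cyclotomic d" using cyc_distinct_prime[OF q, of d d0] d d0 False by auto
          thus ?thesis by (simp add: not_dvd_imp_multiplicity_0)
        qed
      qed
      also have "\<dots> = multiplicity q P" unfolding P_def using q by (rule mult_prodc[symmetric])
      finally show ?thesis .
    next
      case False
      have "multiplicity q G \<le> multiplicity q (f l 0)"
        using fnz[of 0] by (intro dvd_imp_multiplicity_le) (auto simp: G_def intro: Gcd_dvd)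
      also have "\<dots> = (\<Sum>d\<in>{1..l}. ((l - 0) div d + 0 div d) * multiplicity q (cyclotomic d))"
        unfolding f_prod[OF le0] using q by (rule mult_prodc)
      also have "\<dots> = 0" using False by (simp add: not_dvd_imp_multiplicity_0)
      finally show ?thesis by simp
    qed
  qed
  have lcP: "lead_coeff P = 1" unfolding P_def by (simp add: lead_coeff_prod lead_coeff_power lc_cyc)
  have nP: "normalize P = P" by (simp add: normalize_poly_eq_map_poly lcP)
  have nG: "normalize G = G" unfolding G_def by (rule normalize_Gcd)
  have "G = P" by (rule associated_eqI[OF GP PG nG nP])
  thus ?thesis by (simp add: G_def P_def)
qed

end
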